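(* Let $a,b,c$ be positive real numbers and $n\geq1$ an integer. For $i=1,\dots,n$ define \[ f_i(x_1,\ldots,x_n)=\frac{a}{1-x_i}-\frac{b}{x_i}-\sum_{j\neq i}\frac{c}{x_i-x_j}, \] and let $U=\{(x_1,\ldots,x_n)\in\mathbb{R}^n:0<x_1<x_2<\cdots<x_n<1\}$. Let $v$ be a point of the boundary $\partial U$. Then for every sequence $(u_k)$ of points of $U$ converging to $v$, there exists $i\in\{1,\dots,n\}$ such that $\lim_{k\to\infty}|f_i(u_k)|=\infty$.
   Context: When $n=1$ the sum over $j\neq i$ is empty (zero). *)

theory Defs
  imports Complex_Main
begin

text \<open>Points of R^n are represented as functions nat => real whose coordinates
  1..n are the vector entries and which vanish outside {1..n}.\<close>

definition vecn :: "nat \<Rightarrow> (nat \<Rightarrow> real) set" where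
  "vecn n = {x. \<forall>i. i \<notin> {1..n} \<longrightarrow> x i = 0}"

definition fi :: "nat \<Rightarrow> real \<Rightarrow> real \<Rightarrow> real \<Rightarrow> nat \<Rightarrow> (nat \<Rightarrow> real) \<Rightarrow> real" where
  "fi n a b c i x = a / (1 - x i) - b / x i - (\<Sum>j\<in>{1..n} - {i}. c / (x i - x j))"

definition Uset :: "nat \<Rightarrow> (nat \<Rightarrow> real) set" where
  "Uset n = {x \<in> vecn n. 0 < x 1 \<and> (\<forall>i\<in>{1..<n}. x i < x (Suc i)) \<and> x n < 1}"

text \<open>Topological boundary of a set S \<subseteq> R^n, in the Euclidean topology of R^n
  (neighbourhood bases given by sup-norm boxes, which induce the same topology).\<close>
definition boundary_n :: "nat \<Rightarrow> (nat \<Rightarrow> real) set \<Rightarrow> (nat \<Rightarrow> real) set" where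
  "boundary_n n S = {v \<in> vecn n. \<forall>e>0.
      (\<exists>x\<in>S. \<forall>i\<in>{1..n}. \<bar>x i - v i\<bar> < e) \<and>
      (\<exists>x\<in>vecn n - S. \<forall>i\<in>{1..n}. \<bar>x i - v i\<bar> < e)}"

end

theory Submission
  imports Defs
begin

lemma U_mono:
  assumes "x \<in> Uset n" "1 \<le> i" "i < j" "j \<le> n"
  shows "x i < x j"
  using assms(3,4)
proof (induction j)
  case 0 then show ?case by simp
next
  case (Suc j)
  have "x j < x (Suc j)" using assms(1,2) Suc.prems by (auto simp: Uset_def)
  then show ?case
  proof (cases "i < j")
    case True
    then show ?thesis using Suc \<open>x j < x (Suc j)\<close> by force
  next
    case False
    then have "i = j" using Suc.prems by simp
    then show ?thesis using \<open>x j < x (Suc j)\<close> by simp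
  qed
qed

lemma U_bounds:
  assumes "x \<in> Uset n" "i \<in> {1..n}"
  shows "0 < x i" "x i < 1"
proof -
  have a: "0 < x 1" "x n < 1" using assms(1) by (auto simp: Uset_def)
  show "0 < x i"
  proof (cases "i = 1")
    case True then show ?thesis using a by simp
  next
    case False then show ?thesis using a U_mono[OF assms(1), of 1 i] assms(2) by force
  qed
  show "x i < 1"
  proof (cases "i = n")
    case True then show ?thesis using a by simp
  next
    case False then show ?thesis using a U_mono[OF assms(1), of i n] assms(2) by force
  qed
qed

lemma fi_split:
  assumes "p \<in> {1..n}"
  shows "fi n a b c p x = a/(1-x p) - b/x p - (\<Sum>j\<in>{1..<p}. c/(x p - x j))
           - (\<Sum>j\<in>{p<..n}. c/(x p - x j))"
proof -
  have "{1..n} - {p} = {1..<p} \<union> {p<..n}" using assms by auto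
  moreover have "(\<Sum>j\<in>{1..<p} \<union> {p<..n}. c/(x p - x j)) = (\<Sum>j\<in>{1..<p}. c/(x p - x j))
           + (\<Sum>j\<in>{p<..n}. c/(x p - x j))"
    by (rule sum.union_disjoint) auto
  ultimately have "(\<Sum>j\<in>{1..n} - {p}. c/(x p - x j)) = (\<Sum>j\<in>{1..<p}. c/(x p - x j))
           + (\<Sum>j\<in>{p<..n}. c/(x p - x j))" by simp
  then show ?thesis unfolding fi_def by simp
qed

lemma div_at_top:
  fixes d g :: "nat \<Rightarrow> real"
  assumes "(d \<longlongrightarrow> 0) F" "eventually (\<lambda>k. 0 < d k) F" "0 < c" "(g \<longlongrightarrow> L) F"
  shows "filterlim (\<lambda>k. g k + c / d k) at_top F"
proof -
  have "filterlim (\<lambda>k. c * inverse (d k)) at_top F"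
    by (rule filterlim_tendsto_pos_mult_at_top[OF tendsto_const assms(3)
          filterlim_inverse_at_top[OF assms(1,2)]])
  then have "filterlim (\<lambda>k. c / d k) at_top F" by (simp add: divide_inverse)
  then show ?thesis by (rule filterlim_tendsto_add_at_top[OF assms(4)])
qed


lemma neg_div_swap: "(c::real) / (x - y) = - (c / (y - x))"
  by (metis minus_diff_eq minus_divide_right)

theorem lemma6p1:
  fixes a b c :: real and n :: nat and v :: "nat \<Rightarrow> real" and u :: "nat \<Rightarrow> nat \<Rightarrow> real"
  assumes "a > 0" and "b > 0" and "c > 0" and "n \<ge> 1"
    and "v \<in> boundary_n n (Uset n)"
    and "\<And>k. u k \<in> Uset n"
    and "\<And>i. i \<in> {1..n} \<Longrightarrow> (\<lambda>k. u k i) \<longlonglongrightarrow> v i"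
  shows "\<exists>i\<in>{1..n}. filterlim (\<lambda>k. \<bar>fi n a b c i (u k)\<bar>) at_top sequentially"
proof -
  note conv = assms(7)
  note U = assms(6)
  have vmono: "v i \<le> v j" if h: "1 \<le> i" "i \<le> j" "j \<le> n" for i j
  proof (cases "i = j")
    case True then show ?thesis by simp
  next
    case False
    show ?thesis
    proof (rule tendsto_le[OF _ conv conv])
      have "u k i \<le> u k j" for k using h False U_mono[OF U, of i j k] by simp
      then show "\<forall>\<^sub>F x in sequentially. u x i \<le> u x j" by simp
    qed (use h in auto)
  qed
  have v0: "0 \<le> v i" if "i \<in> {1..n}" for i
  proof (rule tendsto_le[OF _ conv[OF that] tendsto_const])
    have "0 \<le> u k i" for k using that U_bounds(1)[OF U, of i k] by simp
    then show "\<forall>\<^sub>F x in sequentially. 0 \<le> u x i" by simp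
  qed simp
  have v1: "v i \<le> 1" if "i \<in> {1..n}" for i
  proof (rule tendsto_le[OF _ tendsto_const conv[OF that]])
    have "u k i \<le> 1" for k using that U_bounds(2)[OF U, of i k] by simp
    then show "\<forall>\<^sub>F x in sequentially. u x i \<le> 1" by simp
  qed simp
  show ?thesis
  proof (cases "v n = 1")
    case True
    define P where "P = {i\<in>{1..n}. v i = 1}"
    define p where "p = Min P"
    have finP: "finite P" and nP: "n \<in> P" using True assms(4) by (auto simp: P_def)
    have pP: "p \<in> P" unfolding p_def using finP nP Min_in by blast
    have pmin: "\<And>j. j \<in> P \<Longrightarrow> p \<le> j" unfolding p_def using finP by simp
    have p1: "p \<in> {1..n}" "v p = 1" using pP by (auto simp: P_def)
    have lt: "v j < 1" if "j \<in> {1..<p}" for j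
    proof -
      have "j \<in> {1..n}" using that p1 by auto
      moreover have "j \<notin> P" using pmin that by force
      ultimately show ?thesis using v1 by (force simp: P_def)
    qed
    define g where "g k = - b / u k p - (\<Sum>j\<in>{1..<p}. c/(u k p - u k j))" for k
    have "g \<longlonglongrightarrow> - b / v p - (\<Sum>j\<in>{1..<p}. c/(v p - v j))"
      unfolding g_def
      by (intro tendsto_intros conv) (use p1 lt in \<open>auto simp: less_imp_neq[symmetric] dest!: lt\<close>)
    moreover have "(\<lambda>k. 1 - u k p) \<longlonglongrightarrow> 0"
      using tendsto_diff[OF tendsto_const conv[OF p1(1)], of 1] p1 by simp
    moreover have "eventually (\<lambda>k. 0 < 1 - u k p) sequentially"
      using U_bounds(2)[OF U p1(1)] by simp
    ultimately have lim: "filterlim (\<lambda>k. g k + a / (1 - u k p)) at_top sequentially"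
      using div_at_top assms(1) by blast
    have "g k + a / (1 - u k p) \<le> \<bar>fi n a b c p (u k)\<bar>" for k
    proof -
      have "(\<Sum>j\<in>{p<..n}. c/(u k p - u k j)) \<le> 0"
      proof (rule sum_nonpos)
        fix j assume "j \<in> {p<..n}"
        then have "u k p < u k j" using U_mono[OF U, of p j] p1 by auto
        then show "c/(u k p - u k j) \<le> 0" using assms(3) by (simp add: divide_pos_neg less_imp_le)
      qed
      then show ?thesis unfolding fi_split[OF p1(1)] g_def by linarith
    qed
    then show ?thesis using p1 filterlim_at_top_mono[OF lim] by (intro bexI[of _ p]) auto
  next
    case vn: False
    show ?thesis
    proof (cases "v 1 = 0")
      case True
      define P where "P = {i\<in>{1..n}. v i = 0}"
      define p where "p = Max P"
      have finP: "finite P" and nP: "1 \<in> P" using True assms(4) by (auto simp: P_def)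
      have pP: "p \<in> P" unfolding p_def using finP nP Max_in by blast
      have pmax: "\<And>j. j \<in> P \<Longrightarrow> j \<le> p" unfolding p_def using finP by simp
      have p1: "p \<in> {1..n}" "v p = 0" using pP by (auto simp: P_def)
      have lt: "0 < v j" if "j \<in> {p<..n}" for j
      proof -
        have "j \<in> {1..n}" using that p1 by auto
        moreover have "j \<notin> P" using pmax that by force
        ultimately show ?thesis using v0 by (force simp: P_def)
      qed
      define g where "g k = - (a / (1 - u k p)) + (\<Sum>j\<in>{p<..n}. c/(u k p - u k j))" for k
      have "g \<longlonglongrightarrow> - (a / (1 - v p)) + (\<Sum>j\<in>{p<..n}. c/(v p - v j))"
        unfolding g_def
        by (intro tendsto_intros conv) (use p1 lt in \<open>auto simp: less_imp_neq[symmetric] dest!: lt\<close>)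
      moreover have "(\<lambda>k. u k p) \<longlonglongrightarrow> 0"
        using conv[OF p1(1)] p1 by simp
      moreover have "eventually (\<lambda>k. 0 < u k p) sequentially"
        using U_bounds(1)[OF U p1(1)] by simp
      ultimately have lim: "filterlim (\<lambda>k. g k + b / u k p) at_top sequentially"
        using div_at_top assms(2) by blast
      have "g k + b / u k p \<le> \<bar>fi n a b c p (u k)\<bar>" for k
      proof -
        have "(\<Sum>j\<in>{1..<p}. c/(u k p - u k j)) \<ge> 0"
        proof (rule sum_nonneg)
          fix j assume "j \<in> {1..<p}"
          then have "u k j < u k p" using U_mono[OF U, of j p] p1 by auto
          then show "c/(u k p - u k j) \<ge> 0" using assms(3) by simp
        qed
        then show ?thesis unfolding fi_split[OF p1(1)] g_def by linarith
      qed
      then show ?thesis using p1 filterlim_at_top_mono[OF lim] by (intro bexI[of _ p]) auto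
    next
      case v1f: False
      have vpos: "0 < v 1" using v0[of 1] v1f assms(4) by force
      have vlt: "v n < 1" using v1[of n] vn assms(4) by force
      have "\<exists>i\<in>{1..<n}. v i = v (Suc i)"
      proof (rule ccontr)
        assume "\<not> ?thesis"
        then have st: "v i < v (Suc i)" if "i \<in> {1..<n}" for i
          using that vmono[of i "Suc i"] by force
        define E where "E = {v 1, 1 - v n} \<union> (\<lambda>i. v (Suc i) - v i) ` {1..<n}"
        define e where "e = Min E / 2"
        have finE: "finite E" unfolding E_def by simp
        have "Min E > 0" using finE vpos vlt st by (subst Min_gr_iff) (auto simp: E_def)
        then have epos: "e > 0" unfolding e_def by simp
        have eb: "2 * e \<le> y" if "y \<in> E" for y using Min_le[OF finE that] unfolding e_def by simp
        obtain x where x: "x \<in> vecn n - Uset n" "\<And>i. i \<in> {1..n} \<Longrightarrow> \<bar>x i - v i\<bar> < e"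
          using assms(5) epos unfolding boundary_n_def by blast
        have "x \<in> Uset n"
          unfolding Uset_def
        proof (intro CollectI conjI ballI)
          show "x \<in> vecn n" using x(1) by simp
          show "0 < x 1" using x(2)[of 1] eb[of "v 1"] assms(4) by (auto simp: E_def)
          show "x n < 1" using x(2)[of n] eb[of "1 - v n"] assms(4) by (auto simp: E_def)
          fix i assume i: "i \<in> {1..<n}"
          show "x i < x (Suc i)" using x(2)[of i] x(2)[of "Suc i"] eb[of "v (Suc i) - v i"] i
            by (auto simp: E_def)
        qed
        then show False using x(1) by simp
      qed
      define P where "P = {i\<in>{1..<n}. v i = v (Suc i)}"
      define p where "p = Min P"
      have finP: "finite P" and neP: "P \<noteq> {}" using \<open>\<exists>i\<in>{1..<n}. v i = v (Suc i)\<close> by (auto simp: P_def)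
      have pP: "p \<in> P" unfolding p_def using finP neP Min_in by blast
      have pmin: "\<And>j. j \<in> P \<Longrightarrow> p \<le> j" unfolding p_def using finP by simp
      have p1: "p \<in> {1..n}" "Suc p \<in> {1..n}" "v p = v (Suc p)" "p < n" using pP by (auto simp: P_def)
      have lt: "v j < v p" if "j \<in> {1..<p}" for j
      proof -
        have "j \<in> {1..<n}" using that p1 by auto
        moreover have "j \<notin> P" using pmin that by force
        ultimately have "v j < v (Suc j)" using vmono[of j "Suc j"] by (force simp: P_def)
        moreover have "v (Suc j) \<le> v p" using vmono[of "Suc j" p] that p1 by auto
        ultimately show ?thesis by simp
      qed
      have lt': "v p - v j \<noteq> 0" if "j \<in> {1..<p}" for j using lt[OF that] by simp
      have vp0: "0 < v p" using vpos vmono[of 1 p] p1 by auto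
      have vp1: "v p < 1" using vlt vmono[of p n] p1 by auto
      define g where "g k = a / (1 - u k p) - b / u k p - (\<Sum>j\<in>{1..<p}. c/(u k p - u k j))" for k
      have "g \<longlonglongrightarrow> a / (1 - v p) - b / v p - (\<Sum>j\<in>{1..<p}. c/(v p - v j))"
        unfolding g_def
        by (intro tendsto_intros conv) (use p1 lt vp0 vp1 lt' in auto)
      moreover have "(\<lambda>k. u k (Suc p) - u k p) \<longlonglongrightarrow> 0"
        using tendsto_diff[OF conv[OF p1(2)] conv[OF p1(1)]] p1 by simp
      moreover have "eventually (\<lambda>k. 0 < u k (Suc p) - u k p) sequentially"
        using U_mono[OF U, of p "Suc p"] p1 by simp
      ultimately have lim: "filterlim (\<lambda>k. g k + c / (u k (Suc p) - u k p)) at_top sequentially"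
        using div_at_top assms(3) by blast
      have "g k + c / (u k (Suc p) - u k p) \<le> \<bar>fi n a b c p (u k)\<bar>" for k
      proof -
        have split: "{p<..n} = insert (Suc p) {Suc p<..n}" using p1 by auto
        have "(\<Sum>j\<in>{Suc p<..n}. c/(u k p - u k j)) \<le> 0"
        proof (rule sum_nonpos)
          fix j assume "j \<in> {Suc p<..n}"
          then have "u k p < u k j" using U_mono[OF U, of p j] p1 by auto
          then show "c/(u k p - u k j) \<le> 0" using assms(3) by (simp add: divide_pos_neg less_imp_le)
        qed
        moreover have "(\<Sum>j\<in>{p<..n}. c/(u k p - u k j)) = c/(u k p - u k (Suc p)) + (\<Sum>j\<in>{Suc p<..n}. c/(u k p - u k j))"
          unfolding split by simp
        moreover have "c/(u k p - u k (Suc p)) = - (c / (u k (Suc p) - u k p))" by (rule neg_div_swap)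
        ultimately show ?thesis unfolding fi_split[OF p1(1)] g_def by linarith
      qed
      then show ?thesis using p1 filterlim_at_top_mono[OF lim] by (intro bexI[of _ p]) auto
    qed
  qed
qed

end
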